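(* For every contractor network and every node $i\in\mathcal V$, the limit $m_i:=\lim_{t\to\infty}m_i^t$ exists, and the vector $\mathbf m=(m_i)_i$ satisfies the fixed-point equation $$m_i=(1-\alpha_i)r_i+\alpha_i\sum_{j\in\delta_{\mathrm{in}}(i)}w_{ij}m_j\quad(i\in\mathcal V),\qquad\text{i.e. }\ \mathbf m=(\mathbf I-\mathbf A)\mathbf r+\mathbf A\mathbf W\mathbf m.$$ Moreover $\mathbf I-\mathbf A\mathbf W$ is invertible, so $\mathbf m$ is the unique solution of this equation, and $\mathbf m=(\mathbf I-\mathbf A\mathbf W)^{-1}(\mathbf I-\mathbf A)\mathbf r$.
   Context: A contractor network is a finite directed graph $G=(\mathcal V,\mathcal E)$ with $n=|\mathcal V|$ nodes, without multiple edges (self-loops and directed cycles are allowed), in which every node has at least one incident edge. For $i\in\mathcal V$ let $\delta_{\mathrm{in}}(i)=\{j:(j,i)\in\mathcal E\}$ and $\delta_{\mathrm{out}}(i)=\{k:(i,k)\in\mathcal E\}$. A node $i$ is a pure principal if $\delta_{\mathrm{in}}(i)=\emptyset$, a pure obligee if $\delta_{\mathrm{out}}(i)=\emptyset$, and an intermediary otherwise. Each edge $(j,i)\in\mathcal E$ carries a weight $w_{ij}>0$; set $w_{ij}=0$ if $(j,i)\notin\mathcal E$; for every node $i$ with $\delta_{\mathrm{in}}(i)\neq\emptyset$ we have $\sum_{j\in\delta_{\mathrm{in}}(i)}w_{ij}=1$. Let $\mathbf W=(w_{ij})_{i,j\in\mathcal V}$. Each node has a risk score $r_i$, with $r_i\in(0,1)$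 if $i$ is not a pure obligee and $r_i=0$ if $i$ is a pure obligee; $\mathbf r=(r_i)_i$. Each node has a propagation parameter $\alpha_i$, with $\alpha_i=0$ for pure principals, $\alpha_i=1$ for pure obligees, and $\alpha_i\in(0,1)$ for intermediaries; $\mathbf A=\mathrm{diag}(\alpha_i)_{i\in\mathcal V}$. The failure process $(\mathbf X^t)_{t\in\mathbb N}$, $\mathbf X^t\in\{0,1\}^n$, is defined by: the $X_i^0$ are independent with $X_i^0\sim\mathrm{Bernoulli}(r_i)$; for each $t\ge0$, conditionally on $(\mathbf X^0,\dots,\mathbf X^t)$, the $X_i^{t+1}$, $i\in\mathcal V$, are independent with $X_i^{t+1}\sim\mathrm{Bernoulli}\big((1-\alpha_i)r_i+\alpha_i\sum_{j\in\delta_{\mathrm{in}}(i)}w_{ij}X_j^t\big)$. Write $m_i^t=\mathbb E[X_i^t]$. *)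

theory Defs
  imports "HOL-Analysis.Analysis" "HOL-Probability.Product_PMF"
begin

text \<open>Nodes are the elements of a finite type 'v (so V = UNIV). An edge (j,i) in E points from j to i.\<close>

definition delta_in :: "('v \<times> 'v) set \<Rightarrow> 'v \<Rightarrow> 'v set" where
  "delta_in E i = {j. (j, i) \<in> E}"

definition delta_out :: "('v \<times> 'v) set \<Rightarrow> 'v \<Rightarrow> 'v set" where
  "delta_out E i = {k. (i, k) \<in> E}"

definition pure_principal :: "('v \<times> 'v) set \<Rightarrow> 'v \<Rightarrow> bool" where
  "pure_principal E i \<longleftrightarrow> delta_in E i = {}"

definition pure_obligee :: "('v \<times> 'v) set \<Rightarrow> 'v \<Rightarrow> bool" where
  "pure_obligee E i \<longleftrightarrow> delta_out E i = {}"

definition intermediary :: "('v \<times> 'v) set \<Rightarrow> 'v \<Rightarrow> bool" where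
  "intermediary E i \<longleftrightarrow> \<not> pure_principal E i \<and> \<not> pure_obligee E i"

definition contractor_network ::
  "('v::finite \<times> 'v) set \<Rightarrow> ('v \<Rightarrow> 'v \<Rightarrow> real) \<Rightarrow> ('v \<Rightarrow> real) \<Rightarrow> ('v \<Rightarrow> real) \<Rightarrow> bool" where
  "contractor_network E w r alpha \<longleftrightarrow>
     (\<forall>i. \<exists>j. (j, i) \<in> E \<or> (i, j) \<in> E) \<and>
     (\<forall>i j. (j, i) \<in> E \<longrightarrow> w i j > 0) \<and>
     (\<forall>i j. (j, i) \<notin> E \<longrightarrow> w i j = 0) \<and>
     (\<forall>i. delta_in E i \<noteq> {} \<longrightarrow> (\<Sum>j\<in>delta_in E i. w i j) = 1) \<and>
     (\<forall>i. \<not> pure_obligee E i \<longrightarrow> 0 < r i \<and> r i < 1) \<and>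
     (\<forall>i. pure_obligee E i \<longrightarrow> r i = 0) \<and>
     (\<forall>i. pure_principal E i \<longrightarrow> alpha i = 0) \<and>
     (\<forall>i. pure_obligee E i \<longrightarrow> alpha i = 1) \<and>
     (\<forall>i. intermediary E i \<longrightarrow> 0 < alpha i \<and> alpha i < 1)"

definition fail_init :: "('v::finite \<Rightarrow> real) \<Rightarrow> ('v \<Rightarrow> bool) pmf" where
  "fail_init r = Pi_pmf UNIV False (\<lambda>i. bernoulli_pmf (r i))"

definition fail_step ::
  "('v::finite \<times> 'v) set \<Rightarrow> ('v \<Rightarrow> 'v \<Rightarrow> real) \<Rightarrow> ('v \<Rightarrow> real) \<Rightarrow> ('v \<Rightarrow> real)
   \<Rightarrow> ('v \<Rightarrow> bool) \<Rightarrow> ('v \<Rightarrow> bool) pmf" where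
  "fail_step E w r alpha x = Pi_pmf UNIV False
     (\<lambda>i. bernoulli_pmf ((1 - alpha i) * r i + alpha i * (\<Sum>j\<in>delta_in E i. w i j * of_bool (x j))))"

primrec fail_dist ::
  "('v::finite \<times> 'v) set \<Rightarrow> ('v \<Rightarrow> 'v \<Rightarrow> real) \<Rightarrow> ('v \<Rightarrow> real) \<Rightarrow> ('v \<Rightarrow> real)
   \<Rightarrow> nat \<Rightarrow> ('v \<Rightarrow> bool) pmf" where
  "fail_dist E w r alpha 0 = fail_init r"
| "fail_dist E w r alpha (Suc t) = bind_pmf (fail_dist E w r alpha t) (fail_step E w r alpha)"

definition fail_mean ::
  "('v::finite \<times> 'v) set \<Rightarrow> ('v \<Rightarrow> 'v \<Rightarrow> real) \<Rightarrow> ('v \<Rightarrow> real) \<Rightarrow> ('v \<Rightarrow> real)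
   \<Rightarrow> nat \<Rightarrow> 'v \<Rightarrow> real" where
  "fail_mean E w r alpha t i = measure_pmf.expectation (fail_dist E w r alpha t) (\<lambda>x. of_bool (x i))"

definition W_mat :: "('v::finite \<Rightarrow> 'v \<Rightarrow> real) \<Rightarrow> real^'v^'v" where
  "W_mat w = (\<chi> i j. w i j)"

definition A_mat :: "('v::finite \<Rightarrow> real) \<Rightarrow> real^'v^'v" where
  "A_mat alpha = (\<chi> i j. if i = j then alpha i else 0)"

definition r_vec :: "('v::finite \<Rightarrow> real) \<Rightarrow> real^'v" where
  "r_vec r = (\<chi> i. r i)"

end

theory Submission
  imports Defs
begin


lemma bern_exp:
  assumes "0 \<le> p" "p \<le> 1"
  shows "measure_pmf.expectation (bernoulli_pmf p) (\<lambda>b. of_bool b) = (p::real)"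
proof -
  have "measure_pmf.expectation (bernoulli_pmf p) (\<lambda>b. of_bool b) = (\<Sum>a\<in>UNIV. pmf (bernoulli_pmf p) a *\<^sub>R (of_bool a::real))"
    by (rule integral_measure_pmf) auto
  also have "\<dots> = p" using assms by (simp add: UNIV_bool)
  finally show ?thesis .
qed

lemma Pi_exp:
  fixes p :: "'v::finite \<Rightarrow> real"
  assumes "\<And>i. 0 \<le> p i" "\<And>i. p i \<le> 1"
  shows "measure_pmf.expectation (Pi_pmf UNIV False (\<lambda>i. bernoulli_pmf (p i))) (\<lambda>x. of_bool (x i)) = p i"
proof -
  have "measure_pmf.expectation (Pi_pmf UNIV False (\<lambda>i. bernoulli_pmf (p i))) (\<lambda>x. (of_bool (x i)::real))
     = measure_pmf.expectation (map_pmf (\<lambda>f. f i) (Pi_pmf UNIV False (\<lambda>i. bernoulli_pmf (p i)))) (\<lambda>b. of_bool b)"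
    by simp
  also have "\<dots> = measure_pmf.expectation (bernoulli_pmf (p i)) (\<lambda>b. of_bool b)"
    by (subst Pi_pmf_component) auto
  also have "\<dots> = p i" using assms bern_exp by blast
  finally show ?thesis .
qed


lemma basic:
  assumes "contractor_network E w r alpha"
  shows "0 \<le> alpha i" "alpha i \<le> 1" "0 \<le> r i" "r i \<le> 1" "0 \<le> w i j"
    "(\<Sum>j\<in>UNIV. w i j) \<le> 1"
    "(\<Sum>j\<in>UNIV. w i j * f j) = (\<Sum>j\<in>delta_in E i. w i j * f j)"
proof -
  note a = assms[unfolded contractor_network_def]
  have "pure_principal E i \<or> pure_obligee E i \<or> intermediary E i" unfolding intermediary_def by blast
  then show "0 \<le> alpha i" "alpha i \<le> 1" using a by (auto simp del: pure_principal_def pure_obligee_def)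
  show "0 \<le> r i" "r i \<le> 1" using a by (cases "pure_obligee E i"; force)+
  show "0 \<le> w i j" using a by (cases "(j,i) \<in> E"; force)
  show sw: "(\<Sum>j\<in>UNIV. w i j * f j) = (\<Sum>j\<in>delta_in E i. w i j * f j)"
    by (rule sum.mono_neutral_right) (use a in \<open>auto simp: delta_in_def\<close>)
  have "(\<Sum>j\<in>UNIV. w i j) = (\<Sum>j\<in>delta_in E i. w i j)"
    by (rule sum.mono_neutral_right) (use a in \<open>auto simp: delta_in_def\<close>)
  then show "(\<Sum>j\<in>UNIV. w i j) \<le> 1" using a by (cases "delta_in E i = {}") auto
qed

lemma param_ok:
  assumes "contractor_network E w r alpha"
  shows "0 \<le> (1 - alpha i) * r i + alpha i * (\<Sum>j\<in>delta_in E i. w i j * of_bool (x j))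
     \<and> (1 - alpha i) * r i + alpha i * (\<Sum>j\<in>delta_in E i. w i j * of_bool (x j)) \<le> 1"
proof -
  note b = basic[OF assms]
  define s where "s = (\<Sum>j\<in>delta_in E i. w i j * of_bool (x j))"
  have s0: "0 \<le> s" unfolding s_def by (intro sum_nonneg) (simp add: b)
  have "s = (\<Sum>j\<in>UNIV. w i j * of_bool (x j))" unfolding s_def by (simp add: b(7))
  also have "\<dots> \<le> (\<Sum>j\<in>UNIV. w i j)" by (intro sum_mono) (simp add: b)
  also have "\<dots> \<le> 1" by (rule b(6))
  finally have s1: "s \<le> 1" .
  have "(1 - alpha i) * r i \<le> (1 - alpha i) * 1" by (intro mult_left_mono) (use b in auto)
  moreover have "alpha i * s \<le> alpha i * 1" by (intro mult_left_mono) (use b s1 in auto)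
  moreover have "0 \<le> (1 - alpha i) * r i" "0 \<le> alpha i * s" using b s0 by auto
  ultimately have "(1 - alpha i) * r i + alpha i * s \<le> (1 - alpha i) * 1 + alpha i * 1"
    "0 \<le> (1 - alpha i) * r i + alpha i * s" by (intro add_mono add_nonneg_nonneg; simp)+
  then show ?thesis unfolding s_def[symmetric] by simp
qed

lemma mean_rec:
  assumes "contractor_network E w r alpha"
  shows "fail_mean E w r alpha 0 i = r i"
    "fail_mean E w r alpha (Suc t) i = (1 - alpha i) * r i + alpha i * (\<Sum>j\<in>delta_in E i. w i j * fail_mean E w r alpha t j)"
proof -
  note b = basic[OF assms]
  show "fail_mean E w r alpha 0 i = r i"
    unfolding fail_mean_def fail_dist.simps fail_init_def by (rule Pi_exp) (use b in auto)
  let ?D = "fail_dist E w r alpha t"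
  let ?q = "\<lambda>x. (1 - alpha i) * r i + alpha i * (\<Sum>j\<in>delta_in E i. w i j * of_bool (x j))"
  have "fail_mean E w r alpha (Suc t) i = (\<Sum>a\<in>UNIV. pmf ?D a *\<^sub>R measure_pmf.expectation (fail_step E w r alpha a) (\<lambda>x. of_bool (x i)))"
    unfolding fail_mean_def fail_dist.simps by (rule pmf_expectation_bind) auto
  also have "\<dots> = (\<Sum>a\<in>UNIV. pmf ?D a *\<^sub>R ?q a)"
    unfolding fail_step_def
    by (intro sum.cong refl, subst Pi_exp) (use param_ok[OF assms] in auto)
  also have "\<dots> = measure_pmf.expectation ?D ?q"
    by (rule integral_measure_pmf[symmetric]) auto
  also have "\<dots> = (1 - alpha i) * r i + alpha i * (\<Sum>j\<in>delta_in E i. w i j * measure_pmf.expectation ?D (\<lambda>x. of_bool (x j)))"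
  proof -
    have I: "integrable (measure_pmf ?D) (f::_\<Rightarrow>real)" for f
      by (rule integrable_measure_pmf_finite) auto
    have "measure_pmf.expectation ?D ?q = (1 - alpha i) * r i + measure_pmf.expectation ?D (\<lambda>x. alpha i * (\<Sum>j\<in>delta_in E i. w i j * of_bool (x j)))"
      by (subst Bochner_Integration.integral_add[OF I I]) simp
    also have "measure_pmf.expectation ?D (\<lambda>x. alpha i * (\<Sum>j\<in>delta_in E i. w i j * of_bool (x j)))
       = alpha i * measure_pmf.expectation ?D (\<lambda>x. (\<Sum>j\<in>delta_in E i. w i j * of_bool (x j)))"
      by (rule integral_mult_right_zero)
    also have "measure_pmf.expectation ?D (\<lambda>x. (\<Sum>j\<in>delta_in E i. w i j * of_bool (x j)))
       = (\<Sum>j\<in>delta_in E i. measure_pmf.expectation ?D (\<lambda>x. w i j * of_bool (x j)))"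
      by (rule Bochner_Integration.integral_sum) (rule I)
    also have "\<dots> = (\<Sum>j\<in>delta_in E i. w i j * measure_pmf.expectation ?D (\<lambda>x. of_bool (x j)))"
      by (intro sum.cong refl integral_mult_right_zero)
    finally show ?thesis .
  qed
  finally show "fail_mean E w r alpha (Suc t) i = (1 - alpha i) * r i + alpha i * (\<Sum>j\<in>delta_in E i. w i j * fail_mean E w r alpha t j)"
    unfolding fail_mean_def .
qed

definition nrm :: "real^'v::finite \<Rightarrow> real" where
  "nrm x = Max (range (\<lambda>i. \<bar>x $ i\<bar>))"

lemma nrm_ge: "\<bar>x $ i\<bar> \<le> nrm x"
  unfolding nrm_def by (rule Max_ge) auto

lemma nrm_le: "(\<And>i. \<bar>x $ i\<bar> \<le> K) \<Longrightarrow> nrm x \<le> K"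
  unfolding nrm_def by (subst Max_le_iff) auto

lemma ifm: "(if P then a else 0) * (b::real) = (if P then a*b else 0)" by simp

lemma M_comp: "((A_mat alpha ** W_mat w) *v x) $ i = alpha i * (\<Sum>j\<in>UNIV. w i j * x $ j)"
  by (simp add: matrix_vector_mult_def matrix_matrix_mult_def A_mat_def W_mat_def
      sum_distrib_left mult.assoc ifm)

lemma b_comp: "((mat 1 - A_mat alpha) *v r_vec r) $ i = (1 - alpha i) * r i"
  by (simp add: matrix_vector_mult_def A_mat_def r_vec_def mat_def
      left_diff_distrib ifm sum_subtractf)

lemma M_bound:
  assumes "contractor_network E w r alpha"
  shows "\<bar>((A_mat alpha ** W_mat w) *v x) $ i\<bar> \<le> alpha i * (\<Sum>j\<in>UNIV. w i j * \<bar>x $ j\<bar>)"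
proof -
  note b = basic[OF assms]
  have "\<bar>(\<Sum>j\<in>UNIV. w i j * x $ j)\<bar> \<le> (\<Sum>j\<in>UNIV. \<bar>w i j * x $ j\<bar>)" by (rule sum_abs)
  also have "\<dots> = (\<Sum>j\<in>UNIV. w i j * \<bar>x $ j\<bar>)" using b by (simp add: abs_mult)
  finally show ?thesis using b by (simp add: M_comp abs_mult mult_left_mono)
qed

lemma M_nrm:
  assumes "contractor_network E w r alpha"
  shows "\<bar>((A_mat alpha ** W_mat w) *v x) $ i\<bar> \<le> alpha i * nrm x"
proof -
  note b = basic[OF assms]
  have "(\<Sum>j\<in>UNIV. w i j * \<bar>x $ j\<bar>) \<le> (\<Sum>j\<in>UNIV. w i j * nrm x)"
    by (intro sum_mono mult_left_mono nrm_ge) (simp add: b)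
  also have "\<dots> = (\<Sum>j\<in>UNIV. w i j) * nrm x" by (simp add: sum_distrib_right)
  also have "\<dots> \<le> nrm x"
  proof -
    have "0 \<le> nrm x" using nrm_ge[of x] abs_ge_zero order_trans by blast
    then show ?thesis using b(6) by (simp add: mult_left_le_one_le sum_nonneg b)
  qed
  finally show ?thesis using M_bound[OF assms, of x i] b
    by (meson mult_left_mono order_trans)
qed

lemma M_nrm1:
  assumes "contractor_network E w r alpha"
  shows "nrm ((A_mat alpha ** W_mat w) *v x) \<le> nrm x"
proof (rule nrm_le)
  fix i
  have "0 \<le> nrm x" using nrm_ge[of x] abs_ge_zero order_trans by blast
  then show "\<bar>((A_mat alpha ** W_mat w) *v x) $ i\<bar> \<le> nrm x"
    using M_nrm[OF assms, of x i] basic[OF assms, of i]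
    by (meson mult_left_le_one_le order_trans)
qed

lemma ci_lt:
  assumes "contractor_network E w r alpha"
  shows "alpha i * (\<Sum>j\<in>UNIV. w i j * alpha j) < 1"
proof -
  note b = basic[OF assms]
  note a = assms[unfolded contractor_network_def]
  have s1: "(\<Sum>j\<in>UNIV. w i j * alpha j) \<le> 1"
  proof -
    have "(\<Sum>j\<in>UNIV. w i j * alpha j) \<le> (\<Sum>j\<in>UNIV. w i j)"
      by (intro sum_mono) (simp add: b mult_right_le_one_le)
    then show ?thesis using b(6)[of i] by linarith
  qed
  show ?thesis
  proof (cases "alpha i < 1")
    case True
    have "alpha i * (\<Sum>j\<in>UNIV. w i j * alpha j) \<le> alpha i * 1"
      by (rule mult_left_mono[OF s1 b(1)])
    then show ?thesis using True by simp
  next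
    case False
    then have ai: "alpha i = 1" using b(2)[of i] by linarith
    have pp: "\<And>k. pure_principal E k \<Longrightarrow> alpha k = 0" using a by blast
    have im: "\<And>k. intermediary E k \<Longrightarrow> 0 < alpha k \<and> alpha k < 1" using a by blast
    have ws: "\<And>k. delta_in E k \<noteq> {} \<Longrightarrow> (\<Sum>j\<in>delta_in E k. w k j) = 1" using a by blast
    have wp: "\<And>k j. (j, k) \<in> E \<Longrightarrow> w k j > 0" using a by blast
    have np: "\<not> pure_principal E i" using pp ai by force
    have ni: "\<not> intermediary E i" using im ai by force
    have ob: "pure_obligee E i" using np ni unfolding intermediary_def by blast
    obtain j0 where "(j0, i) \<in> E \<or> (i, j0) \<in> E" using a by blast
    then have j0: "(j0, i) \<in> E" using ob unfolding pure_obligee_def delta_out_def by blast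
    have din: "delta_in E i \<noteq> {}" using j0 unfolding delta_in_def by blast
    have aj: "alpha j < 1" if "j \<in> delta_in E i" for j
    proof -
      have "\<not> pure_obligee E j" using that unfolding delta_in_def pure_obligee_def delta_out_def by blast
      then have "pure_principal E j \<or> intermediary E j" unfolding intermediary_def by blast
      then show ?thesis using pp im by force
    qed
    have "(\<Sum>j\<in>UNIV. w i j * alpha j) = (\<Sum>j\<in>delta_in E i. w i j * alpha j)" by (rule b(7))
    also have "\<dots> < (\<Sum>j\<in>delta_in E i. w i j)"
    proof (rule sum_strict_mono)
      show "finite (delta_in E i)" by simp
      show "delta_in E i \<noteq> {}" by (rule din)
      fix j assume "j \<in> delta_in E i"
      moreover then have "w i j > 0" using wp unfolding delta_in_def by blast
      ultimately show "w i j * alpha j < w i j" using aj by simp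
    qed
    also have "\<dots> = 1" using ws din by blast
    finally show ?thesis using ai by simp
  qed
qed


lemma nrm_nonneg: "0 \<le> nrm x"
  using nrm_ge[of x] abs_ge_zero order_trans by blast

theorem mainTheorem4:
  fixes E :: "('v::finite \<times> 'v) set" and w :: "'v \<Rightarrow> 'v \<Rightarrow> real"
    and r alpha :: "'v \<Rightarrow> real"
  assumes "contractor_network E w r alpha"
  shows "\<exists>m :: real^'v.
     (\<forall>i. (\<lambda>t. fail_mean E w r alpha t i) \<longlonglongrightarrow> m $ i) \<and>
     (\<forall>i. m $ i = (1 - alpha i) * r i + alpha i * (\<Sum>j\<in>delta_in E i. w i j * m $ j)) \<and>
     m = (mat 1 - A_mat alpha) *v r_vec r + (A_mat alpha ** W_mat w) *v m \<and>
     invertible (mat 1 - A_mat alpha ** W_mat w) \<and>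
     (\<forall>x :: real^'v. x = (mat 1 - A_mat alpha) *v r_vec r + (A_mat alpha ** W_mat w) *v x \<longrightarrow> x = m) \<and>
     m = matrix_inv (mat 1 - A_mat alpha ** W_mat w) *v ((mat 1 - A_mat alpha) *v r_vec r)"
proof -
  note b = basic[OF assms]
  define M where "M = A_mat alpha ** W_mat w"
  define bv where "bv = (mat 1 - A_mat alpha) *v r_vec r"
  define N where "N = mat 1 - M"
  define ci where "ci = (\<lambda>i. alpha i * (\<Sum>j\<in>UNIV. w i j * alpha j))"
  define c where "c = Max (range ci)"
  have c_lt: "c < 1" unfolding c_def using ci_lt[OF assms] by (subst Max_less_iff) (auto simp: ci_def)
  have c_ge: "0 \<le> c"
  proof -
    have "0 \<le> ci undefined" unfolding ci_def using b
      by (intro mult_nonneg_nonneg sum_nonneg) auto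
    also have "ci undefined \<le> c" unfolding c_def by (rule Max_ge) auto
    finally show ?thesis .
  qed
  have M2: "nrm (M *v (M *v x)) \<le> c * nrm x" for x
  proof (rule nrm_le)
    fix i
    have "\<bar>(M *v (M *v x)) $ i\<bar> \<le> alpha i * (\<Sum>j\<in>UNIV. w i j * \<bar>(M *v x) $ j\<bar>)"
      unfolding M_def by (rule M_bound[OF assms])
    also have "\<dots> \<le> alpha i * (\<Sum>j\<in>UNIV. w i j * (alpha j * nrm x))"
      unfolding M_def
      by (intro mult_left_mono sum_mono M_nrm[OF assms]) (use b in auto)
    also have "\<dots> = ci i * nrm x" unfolding ci_def
      by (simp add: sum_distrib_right mult.assoc)
    also have "\<dots> \<le> c * nrm x" unfolding c_def
      by (intro mult_right_mono Max_ge nrm_nonneg) auto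
    finally show "\<bar>(M *v (M *v x)) $ i\<bar> \<le> c * nrm x" .
  qed
  have M1: "nrm (M *v x) \<le> nrm x" for x unfolding M_def by (rule M_nrm1[OF assms])
  have zero: "x = 0" if "nrm x \<le> 0" for x :: "real^'v"
  proof -
    have "\<bar>x $ i\<bar> \<le> 0" for i using nrm_ge[of x i] that by linarith
    then show ?thesis by (simp add: vec_eq_iff)
  qed
  have ker: "x = 0" if "N *v x = 0" for x
  proof -
    have "x = M *v x" using that unfolding N_def by (simp add: matrix_vector_mult_diff_rdistrib)
    then have "x = M *v (M *v x)" by simp
    then have "nrm x \<le> c * nrm x" using M2[of x] by simp
    then have "nrm x \<le> 0" using c_lt nrm_nonneg[of x]
      by (smt (verit) mult_le_cancel_right1)
    then show ?thesis by (rule zero)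
  qed
  obtain B where "B ** N = mat 1" using ker matrix_left_invertible_ker by blast
  then have BN: "B ** N = mat 1" "N ** B = mat 1" using matrix_left_right_inverse by blast+
  then have inv: "invertible N" unfolding invertible_def by blast
  then have NI: "N ** matrix_inv N = mat 1" "matrix_inv N ** N = mat 1"
    unfolding matrix_inv_def invertible_def by (metis (mono_tags, lifting) someI_ex)+
  define m where "m = matrix_inv N *v bv"
  have Nm: "N *v m = bv" unfolding m_def by (simp add: matrix_vector_mul_assoc NI)
  have fixm: "m = bv + M *v m"
    using Nm unfolding N_def by (simp add: matrix_vector_mult_diff_rdistrib diff_eq_eq)
  have uniq: "x = m" if "x = bv + M *v x" for x
  proof -
    have "N *v x = bv" using that unfolding N_def
      by (simp add: matrix_vector_mult_diff_rdistrib algebra_simps)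
    then have "matrix_inv N *v (N *v x) = m" unfolding m_def by simp
    then show ?thesis by (simp add: matrix_vector_mul_assoc NI)
  qed
  have comp: "m $ i = (1 - alpha i) * r i + alpha i * (\<Sum>j\<in>delta_in E i. w i j * m $ j)" for i
  proof -
    have "m $ i = bv $ i + (M *v m) $ i" using fixm by (metis vector_add_component)
    also have "\<dots> = (1 - alpha i) * r i + alpha i * (\<Sum>j\<in>UNIV. w i j * m $ j)"
      unfolding bv_def M_def by (simp add: b_comp M_comp)
    finally show ?thesis using b(7) by simp
  qed
  define mt where "mt = (\<lambda>t. \<chi> i. fail_mean E w r alpha t i)"
  have mt_suc: "mt (Suc t) = bv + M *v mt t" for t
  proof -
    have "mt (Suc t) $ i = (bv + M *v mt t) $ i" for i
      unfolding mt_def bv_def M_def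
      by (simp add: b_comp M_comp mean_rec[OF assms] b(7))
    then show ?thesis by (simp add: vec_eq_iff)
  qed
  define e where "e = (\<lambda>t. mt t - m)"
  have e_suc: "e (Suc t) = M *v e t" for t
    unfolding e_def using mt_suc[of t] fixm
    by (metis add_diff_cancel_left matrix_vector_mult_diff_distrib diff_add_eq_diff_diff_swap add_diff_add)
  define K where "K = nrm (e 0)"
  have ebound: "nrm (e t) \<le> c ^ (t div 2) * K" for t
  proof (induction t rule: less_induct)
    case (less t)
    show ?case
    proof (cases "t < 2")
      case True
      then consider "t = 0" | "t = 1" by linarith
      then show ?thesis
      proof cases
        case 1 then show ?thesis by (simp add: K_def)
      next
        case 2 then show ?thesis using M1[of "e 0"] e_suc[of 0] by (simp add: K_def)
      qed
    next
      case False
      then obtain s where t: "t = Suc (Suc s)" by (metis add_2_eq_Suc le_add_diff_inverse not_less)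
      have "nrm (e t) = nrm (M *v (M *v e s))" using t e_suc by simp
      also have "\<dots> \<le> c * nrm (e s)" by (rule M2)
      also have "\<dots> \<le> c * (c ^ (s div 2) * K)"
        using less[of s] t c_ge by (intro mult_left_mono) auto
      also have "\<dots> = c ^ (t div 2) * K" using t by simp
      finally show ?thesis .
    qed
  qed
  have lim: "(\<lambda>t. fail_mean E w r alpha t i) \<longlonglongrightarrow> m $ i" for i
  proof -
    have div: "filterlim (\<lambda>t::nat. t div 2) sequentially sequentially"
      unfolding filterlim_at_top eventually_sequentially
      by (metis div_le_mono div_mult_self1_is_m mult.commute zero_less_numeral)
    have "(\<lambda>t. c ^ t) \<longlonglongrightarrow> 0" using c_lt c_ge by (intro LIMSEQ_power_zero) simp
    then have "(\<lambda>t. c ^ (t div 2)) \<longlonglongrightarrow> 0" using filterlim_compose div by blast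
    then have g: "(\<lambda>t. c ^ (t div 2) * K) \<longlonglongrightarrow> 0" by (intro tendsto_mult_left_zero)
    have "(\<lambda>t. fail_mean E w r alpha t i - m $ i) \<longlonglongrightarrow> 0"
    proof (rule Lim_null_comparison[OF _ g], intro always_eventually allI)
      fix t
      have "fail_mean E w r alpha t i - m $ i = e t $ i" unfolding e_def mt_def by simp
      then show "norm (fail_mean E w r alpha t i - m $ i) \<le> c ^ (t div 2) * K"
        using nrm_ge[of "e t" i] ebound[of t] by simp
    qed
    then show ?thesis by (simp add: Lim_null[symmetric])
  qed
  show ?thesis
    apply (rule exI[of _ m])
    using lim comp fixm inv uniq m_def unfolding M_def bv_def N_def by blast
qed

end
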